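(* Let $G=(V,E)$ be a finite, connected, undirected graph with $n\ge2$ vertices, let $r>0$, let $(X_i)_{i\ge0}$ be the Moran process on $G$ with fitness $r$, and let $\emptyset\subsetneq S\subsetneq V$. If $r\ge1$ then $$\mathbb{E}[\phi(X_{i+1})-\phi(X_i)\mid X_i=S]\ \ge\ \Big(1-\frac1r\Big)\frac{1}{n^3},$$ with equality if and only if $r=1$. If $r<1$ then $$\mathbb{E}[\phi(X_{i+1})-\phi(X_i)\mid X_i=S]\ <\ \frac{r-1}{n^3}.$$
   Context: The Moran process on $G$ with mutant fitness $r>0$ is the Markov chain $(X_i)_{i\ge0}$ whose state $X_i\subseteq V$ is the set of vertices occupied by mutants; every other vertex is occupied by a non-mutant of fitness $1$. Write $W(S)=r|S|+|V\setminus S|$ for the total fitness. Given $X_i=S$, one step is: choose a vertex $x$ with probability $r/W(S)$ if $x\in S$ and $1/W(S)$ if $x\notin S$; then choose a neighbour $y$ of $x$ uniformly at random; set $X_{i+1}=S\cup\{y\}$ if $x\in S$ and $X_{i+1}=S\setminus\{y\}$ if $x\notin S$. The potential of a set $X\subseteq V$ is $\phi(X)=\sum_{x\in X}\frac{1}{\deg x}$. *)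

theory Defs
  imports Complex_Main
begin

definition graph_conn :: "'a set \<Rightarrow> ('a \<Rightarrow> 'a \<Rightarrow> bool) \<Rightarrow> bool" where
  "graph_conn V E \<longleftrightarrow> finite V
     \<and> (\<forall>a b. E a b \<longrightarrow> a \<in> V \<and> b \<in> V)
     \<and> (\<forall>a b. E a b \<longrightarrow> E b a)
     \<and> (\<forall>a. \<not> E a a)
     \<and> (\<forall>u\<in>V. \<forall>v\<in>V. E\<^sup>*\<^sup>* u v)"

definition nbrs :: "'a set \<Rightarrow> ('a \<Rightarrow> 'a \<Rightarrow> bool) \<Rightarrow> 'a \<Rightarrow> 'a set" where
  "nbrs V E x = {y \<in> V. E x y}"

definition deg :: "'a set \<Rightarrow> ('a \<Rightarrow> 'a \<Rightarrow> bool) \<Rightarrow> 'a \<Rightarrow> nat" where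
  "deg V E x = card (nbrs V E x)"

definition potential :: "'a set \<Rightarrow> ('a \<Rightarrow> 'a \<Rightarrow> bool) \<Rightarrow> 'a set \<Rightarrow> real" where
  "potential V E X = (\<Sum>x\<in>X. 1 / real (deg V E x))"

definition total_fitness :: "'a set \<Rightarrow> real \<Rightarrow> 'a set \<Rightarrow> real" where
  "total_fitness V r S = r * real (card S) + real (card (V - S))"

definition fit :: "real \<Rightarrow> 'a set \<Rightarrow> 'a \<Rightarrow> real" where
  "fit r S x = (if x \<in> S then r else 1)"

text \<open>Outcome of one step when x reproduces onto neighbour y.\<close>
definition moran_update :: "'a set \<Rightarrow> 'a \<Rightarrow> 'a \<Rightarrow> 'a set" where
  "moran_update S x y = (if x \<in> S then S \<union> {y} else S - {y})"

definition moran_trans :: "'a set \<Rightarrow> ('a \<Rightarrow> 'a \<Rightarrow> bool) \<Rightarrow> real \<Rightarrow> 'a set \<Rightarrow> 'a set \<Rightarrow> real" where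
  "moran_trans V E r S T =
     (\<Sum>x\<in>V. \<Sum>y\<in>nbrs V E x.
        if moran_update S x y = T
        then fit r S x / total_fitness V r S * (1 / real (deg V E x)) else 0)"

definition expected_potential_change ::
  "'a set \<Rightarrow> ('a \<Rightarrow> 'a \<Rightarrow> bool) \<Rightarrow> real \<Rightarrow> 'a set \<Rightarrow> real" where
  "expected_potential_change V E r S =
     (\<Sum>T\<in>Pow V. moran_trans V E r S T * (potential V E T - potential V E S))"

end

theory Submission imports Defs begin

lemma epc_reduce:
  assumes fin: "finite V" and SV: "S \<subseteq> V"
  shows "expected_potential_change V E r S =
    (\<Sum>x\<in>V. \<Sum>y\<in>nbrs V E x. fit r S x / total_fitness V r S * (1 / real (deg V E x))
        * (potential V E (moran_update S x y) - potential V E S))"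
proof -
  let ?c = "\<lambda>x. fit r S x / total_fitness V r S * (1 / real (deg V E x))"
  let ?d = "\<lambda>T. potential V E T - potential V E S"
  have fn: "finite (nbrs V E x)" for x using fin by (simp add: nbrs_def)
  have mem: "moran_update S x y \<in> Pow V" if "y \<in> nbrs V E x" for x y
    using that SV by (auto simp: moran_update_def nbrs_def)
  have "expected_potential_change V E r S =
     (\<Sum>T\<in>Pow V. \<Sum>x\<in>V. \<Sum>y\<in>nbrs V E x. (if moran_update S x y = T then ?c x * ?d T else 0))"
    unfolding expected_potential_change_def moran_trans_def
    by (simp add: sum_distrib_right; intro sum.cong refl; simp)
  also have "\<dots> = (\<Sum>x\<in>V. \<Sum>y\<in>nbrs V E x. \<Sum>T\<in>Pow V. (if moran_update S x y = T then ?c x * ?d T else 0))"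
    apply (subst sum.swap)
    apply (rule sum.cong, rule refl)
    apply (subst sum.swap) by (rule refl)
  also have "\<dots> = (\<Sum>x\<in>V. \<Sum>y\<in>nbrs V E x. ?c x * ?d (moran_update S x y))"
    apply (rule sum.cong, rule refl)
    apply (rule sum.cong, rule refl)
    using mem fin by (simp add: sum.delta)
  finally show ?thesis by simp
qed

lemma pot_insert: "finite S \<Longrightarrow> y \<notin> S \<Longrightarrow> potential V E (insert y S) = potential V E S + 1 / real (deg V E y)"
  unfolding potential_def by simp
lemma pot_remove: "finite S \<Longrightarrow> y \<in> S \<Longrightarrow> potential V E (S - {y}) = potential V E S - 1 / real (deg V E y)"
  unfolding potential_def by (simp add: sum_diff1)

lemma cut_edge:
  assumes "R\<^sup>*\<^sup>* u v" "u \<in> S" "v \<notin> S"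
  shows "\<exists>a b. R a b \<and> a \<in> S \<and> b \<notin> S"
  using assms by (induction rule: rtranclp_induct) auto

lemma epc_formula:
  assumes g: "graph_conn V E" and SV: "S \<subseteq> V"
  defines "h \<equiv> \<lambda>x y. if E x y \<and> x \<in> S \<and> y \<notin> S then 1 / (real (deg V E x) * real (deg V E y)) else 0"
  shows "expected_potential_change V E r S = (r - 1) / total_fitness V r S * (\<Sum>x\<in>V. \<Sum>y\<in>V. h x y)"
proof -
  let ?W = "total_fitness V r S"
  have fin: "finite V" and sym: "\<And>a b. E a b \<Longrightarrow> E b a" using g by (auto simp: graph_conn_def)
  have finS: "finite S" using fin SV finite_subset by blast
  have "expected_potential_change V E r S =
    (\<Sum>x\<in>V. \<Sum>y\<in>nbrs V E x. fit r S x / ?W * (1 / real (deg V E x))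
        * (potential V E (moran_update S x y) - potential V E S))"
    by (rule epc_reduce[OF fin SV])
  also have "\<dots> = (\<Sum>x\<in>V. \<Sum>y\<in>V. if E x y then fit r S x / ?W * (1 / real (deg V E x))
        * (potential V E (moran_update S x y) - potential V E S) else 0)"
    unfolding nbrs_def by (rule sum.cong[OF refl], rule sum.inter_filter[OF fin])
  also have "\<dots> = (\<Sum>x\<in>V. \<Sum>y\<in>V. r / ?W * h x y - 1 / ?W * h y x)"
  proof (intro sum.cong refl)
    fix x y assume "x \<in> V" "y \<in> V"
    show "(if E x y then fit r S x / ?W * (1 / real (deg V E x))
        * (potential V E (moran_update S x y) - potential V E S) else 0) = r / ?W * h x y - 1 / ?W * h y x"
      using sym[of x y] sym[of y x]
      by (cases "E x y"; cases "x \<in> S"; cases "y \<in> S")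
         (auto simp: h_def fit_def moran_update_def pot_insert[OF finS] pot_remove[OF finS]
           insert_absorb Un_insert_right)
  qed
  also have "\<dots> = r / ?W * (\<Sum>x\<in>V. \<Sum>y\<in>V. h x y) - 1 / ?W * (\<Sum>x\<in>V. \<Sum>y\<in>V. h y x)"
    by (simp add: sum_subtractf sum_distrib_left)
  also have "(\<Sum>x\<in>V. \<Sum>y\<in>V. h y x) = (\<Sum>x\<in>V. \<Sum>y\<in>V. h x y)"
    by (rule sum.swap)
  finally show ?thesis by (simp add: diff_divide_distrib left_diff_distrib)
qed

lemma deg_bounds:
  assumes g: "graph_conn V E" and "E a b"
  shows "1 \<le> deg V E a" "deg V E a < card V"
proof -
  have fin: "finite V" and ab: "a \<in> V" "b \<in> V" and irr: "\<not> E a a"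
    using g assms(2) by (auto simp: graph_conn_def)
  have "b \<in> nbrs V E a" using ab assms(2) by (simp add: nbrs_def)
  moreover have fn: "finite (nbrs V E a)" using fin by (simp add: nbrs_def)
  ultimately have "card (nbrs V E a) > 0" using card_gt_0_iff by blast
  thus "1 \<le> deg V E a" unfolding deg_def by simp
  have "nbrs V E a \<subseteq> V - {a}" using irr by (auto simp: nbrs_def)
  hence "deg V E a \<le> card (V - {a})" unfolding deg_def using fin by (simp add: card_mono)
  also have "\<dots> < card V" using fin ab(1) by (meson card_Diff1_less)
  finally show "deg V E a < card V" .
qed

theorem lemma3:
  fixes V :: "'a set" and E :: "'a \<Rightarrow> 'a \<Rightarrow> bool" and r :: real and S :: "'a set"
  assumes "graph_conn V E"
    and "card V \<ge> 2"
    and "r > 0"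
    and "S \<noteq> {}" and "S \<subset> V"
  shows "(r \<ge> 1 \<longrightarrow>
            expected_potential_change V E r S \<ge> (1 - 1 / r) * (1 / real (card V) ^ 3)
          \<and> (expected_potential_change V E r S = (1 - 1 / r) * (1 / real (card V) ^ 3)
               \<longleftrightarrow> r = 1))
       \<and> (r < 1 \<longrightarrow> expected_potential_change V E r S < (r - 1) / real (card V) ^ 3)"
proof -
  note g = assms(1)
  define h where "h \<equiv> \<lambda>x y. if E x y \<and> x \<in> S \<and> y \<notin> S then 1 / (real (deg V E x) * real (deg V E y)) else (0::real)"
  define C where "C = (\<Sum>x\<in>V. \<Sum>y\<in>V. h x y)"
  define W where "W = total_fitness V r S"
  define n where "n = real (card V)"
  have SV: "S \<subseteq> V" using assms(5) by auto
  have fin: "finite V" using g by (simp add: graph_conn_def)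
  have finS: "finite S" using fin SV finite_subset by blast
  have epc: "expected_potential_change V E r S = (r - 1) / W * C"
    unfolding C_def W_def h_def by (rule epc_formula[OF g SV])
  have n2: "n \<ge> 2" using assms(2) unfolding n_def by simp
  have cs: "real (card S) + real (card (V - S)) = n"
    unfolding n_def using card_Diff_subset[OF finS SV] card_mono[OF fin SV] by simp
  have "card S > 0" using finS assms(4) by (simp add: card_gt_0_iff)
  hence cS: "real (card S) \<ge> 1" by simp
  have "V - S \<noteq> {}" using assms(5) by blast
  hence "card (V - S) > 0" using fin by (simp add: card_gt_0_iff)
  hence cVS: "real (card (V - S)) \<ge> 1" by simp
  have Wdef: "W = r * real (card S) + real (card (V - S))" unfolding W_def total_fitness_def by simp
  have "r * real (card S) > 0" using assms(3) cS by simp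
  hence Wpos: "W > 0" using Wdef cVS by linarith
  have hnn: "h x y \<ge> 0" for x y unfolding h_def by simp
  obtain u v where uv: "u \<in> S" "v \<in> V" "v \<notin> S" using assms(4,5) by blast
  have "E\<^sup>*\<^sup>* u v" using g uv SV by (auto simp: graph_conn_def)
  then obtain a b where ab: "E a b" "a \<in> S" "b \<notin> S" using cut_edge uv by metis
  have abV: "a \<in> V" "b \<in> V" using g ab by (auto simp: graph_conn_def)
  have Eba: "E b a" using g ab by (auto simp: graph_conn_def)
  have da: "1 \<le> real (deg V E a)" "real (deg V E a) < n" using deg_bounds[OF g ab(1)] unfolding n_def by auto
  have db: "1 \<le> real (deg V E b)" "real (deg V E b) < n" using deg_bounds[OF g Eba] unfolding n_def by auto
  have "real (deg V E a) * real (deg V E b) < n * n"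
    using da db by (intro mult_strict_mono) auto
  hence hab: "h a b > 1 / n^2" unfolding h_def using ab da db
    by (simp add: power2_eq_square frac_less2)
  have "h a b \<le> (\<Sum>y\<in>V. h a y)" using fin abV hnn by (intro member_le_sum) auto
  also have "\<dots> \<le> C" unfolding C_def using fin abV hnn
    by (intro member_le_sum[where f="\<lambda>x. \<Sum>y\<in>V. h x y"]) (auto intro: sum_nonneg)
  finally have Cgt: "C > 1 / n^2" using hab by linarith
  have npos: "n > 0" using n2 by simp
  have "1 / n^2 > 0" using npos by simp
  hence Cnn: "C \<ge> 0" using Cgt by linarith
  show ?thesis
  proof (intro conjI impI)
    assume r1: "r \<ge> 1"
    have "1 * real (card (V - S)) \<le> r * real (card (V - S))" using r1 by (intro mult_right_mono) auto
    moreover have "r * n = r * real (card S) + r * real (card (V - S))" by (simp add: ring_distribs flip: cs)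
    ultimately have WrN: "W \<le> r * n" using Wdef by linarith
    have key: "C / W > 1 / (r * n^3)"
    proof -
      have "1 / (r * n^3) = (1/n^2) / (r*n)" by (simp add: power3_eq_cube power2_eq_square field_simps)
      also have "\<dots> < C / (r * n)" using Cgt npos assms(3) by (intro divide_strict_right_mono) auto
      also have "\<dots> \<le> C / W" using WrN Wpos Cnn npos assms(3)
        by (intro divide_left_mono) auto
      finally show ?thesis .
    qed
    have rhs: "(1 - 1 / r) * (1 / n ^ 3) = (r - 1) * (1 / (r * n^3))" using assms(3) by (simp add: field_simps)
    have e2: "expected_potential_change V E r S = (r - 1) * (C / W)" using epc by simp
    show "expected_potential_change V E r S \<ge> (1 - 1 / r) * (1 / real (card V) ^ 3)"
      unfolding n_def[symmetric] rhs e2 using key r1 by (intro mult_left_mono) auto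
    show "(expected_potential_change V E r S = (1 - 1 / r) * (1 / real (card V) ^ 3)) \<longleftrightarrow> r = 1"
      unfolding n_def[symmetric] rhs e2
    proof
      assume eq: "(r - 1) * (C / W) = (r - 1) * (1 / (r * n ^ 3))"
      show "r = 1"
      proof (rule ccontr)
        assume "r \<noteq> 1"
        hence "r - 1 > 0" using r1 by simp
        hence "(r - 1) * (1 / (r * n ^ 3)) < (r - 1) * (C / W)" using key by (intro mult_strict_left_mono)
        thus False using eq by simp
      qed
    qed simp
  next
    assume r1: "r < 1"
    have "r * real (card S) \<le> 1 * real (card S)" using r1 by (intro mult_right_mono) auto
    hence WN: "W \<le> n" using Wdef cs by linarith
    have key: "C / W > 1 / n^3"
    proof -
      have "1 / n^3 = (1/n^2) / n" by (simp add: power3_eq_cube power2_eq_square field_simps)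
      also have "\<dots> < C / n" using Cgt npos by (intro divide_strict_right_mono) auto
      also have "\<dots> \<le> C / W" using WN Wpos Cnn npos
        by (intro divide_left_mono) auto
      finally show ?thesis .
    qed
    have e2: "expected_potential_change V E r S = (r - 1) * (C / W)" using epc by simp
    have "(r - 1) * (C / W) < (r - 1) * (1 / n^3)" using key r1 by (intro mult_strict_left_mono_neg) auto
    thus "expected_potential_change V E r S < (r - 1) / real (card V) ^ 3"
      unfolding n_def[symmetric] e2 by simp
  qed
qed

end
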